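(* Let $0<\mu<1$. On zero-mean functions on $\mathbb T^3$ define Fourier multipliers: $\mathcal Q$ with symbol $\widehat{\mathcal Q}(k,l,m)=\frac{\sqrt2}{\sqrt{1+\mu^2+\sqrt{(1+\mu^2)^2-4\mu^2\frac{m^2}{k^2+l^2+m^2}}}}$ (i.e. $\mathcal Q=\sqrt{2(1+\mu^2+\sqrt{(1+\mu^2)^2-4\mu^2\partial_z^2\Delta^{-1}})^{-1}}$), and $$\mathcal C=-\mathcal Q(1-\mu^2\partial_z^2\Delta^{-1}\mathcal Q^2)^{-1},\quad\mathcal A=-\mathcal C\mathcal Q^{-1},\quad\mathcal B=\partial_z^2\Delta^{-1}\mathcal C\mathcal Q,\quad\mathcal D=\mathcal Q^{-1}.$$ For a scalar function $\varphi$ define the 7-component states $$V_\alpha\varphi=\Big(\varphi,\ \mathbf 0_3,\ \mu\mathcal A\Delta^{-1}\partial_z\nabla\varphi+(0,0,-\mu\varphi+\mu^3\mathcal B\varphi)\Big),\qquad V_\beta\varphi=\Big(0,\ (\mu^2\mathcal C\Delta^{-1}\partial_z\nabla_h\varphi,\ \mathcal D\varphi),\ \mathbf 0_3\Big).$$ Then for every such $\varphi$, $$(\mathcal L_A+\mu\mathcal L_M)(V_\alpha\varphi)+\mu\mathcal Q\partial_z(V_\beta\varphi)=0=(\mathcal L_A+\mu\mathcal L_M)(V_\beta\varphi)+\mu\mathcal Q\partial_z(V_\alpha\varphi).$$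
   Context: Spatial domain $\mathbb T^3$ with coordinates $(x,y,z)$ and Fourier variables $(k,l,m)$. States are $V=(r,\mathbf u,\mathbf b)$ with $\mathbf u=(\mathbf u_h,u_3)$, $\mathbf b=(\mathbf b_h,b_3)$, $\mathbf w_h=(w_1,w_2)$. $\nabla_h=(\partial_x,\partial_y)$; $\Delta^{-1}$ is the inverse Laplacian on zero-mean functions, so $\partial_z^2\Delta^{-1}$ has symbol $m^2/(k^2+l^2+m^2)$. $\mathcal L_AV=(0,(-\nabla_hb_3+\partial_z\mathbf b_h,0),(\partial_z\mathbf u_h,-\nabla_h\cdot\mathbf u_h))$, $\mathcal L_MV=(-\nabla\cdot\mathbf u,-\nabla r,\mathbf 0)$. *)

theory Defs
  imports Complex_Main
begin

text \<open>Zero-mean functions on the 3-torus are represented by their Fourier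
coefficients, indexed by frequencies (k,l,m) in Z^3. All operators in the
statement are Fourier multipliers and act coefficientwise.\<close>

type_synonym freq = "int \<times> int \<times> int"
type_synonym field = "freq \<Rightarrow> complex"
type_synonym vfield = "field \<times> field \<times> field"
type_synonym state = "field \<times> vfield \<times> vfield"  \<comment> \<open>(r, u, b)\<close>

definition fzero :: field where "fzero = (\<lambda>_. 0)"
definition fadd :: "field \<Rightarrow> field \<Rightarrow> field" where "fadd f g = (\<lambda>\<xi>. f \<xi> + g \<xi>)"
definition fneg :: "field \<Rightarrow> field" where "fneg f = (\<lambda>\<xi>. - f \<xi>)"
definition fscale :: "real \<Rightarrow> field \<Rightarrow> field" where "fscale c f = (\<lambda>\<xi>. complex_of_real c * f \<xi>)"

definition dx :: "field \<Rightarrow> field" where "dx f = (\<lambda>(k,l,m). \<i> * of_int k * f (k,l,m))"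
definition dy :: "field \<Rightarrow> field" where "dy f = (\<lambda>(k,l,m). \<i> * of_int l * f (k,l,m))"
definition dz :: "field \<Rightarrow> field" where "dz f = (\<lambda>(k,l,m). \<i> * of_int m * f (k,l,m))"

definition nsq :: "freq \<Rightarrow> real" where "nsq = (\<lambda>(k,l,m). real_of_int (k^2 + l^2 + m^2))"

definition lapinv :: "field \<Rightarrow> field" where
  "lapinv f = (\<lambda>\<xi>. if \<xi> = (0,0,0) then 0 else - f \<xi> / complex_of_real (nsq \<xi>))"

definition mult :: "(freq \<Rightarrow> real) \<Rightarrow> field \<Rightarrow> field" where
  "mult \<sigma> f = (\<lambda>\<xi>. complex_of_real (\<sigma> \<xi>) * f \<xi>)"

text \<open>Symbol of dz^2 lapinv: m^2/(k^2+l^2+m^2).\<close>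
definition zsym :: "freq \<Rightarrow> real" where
  "zsym = (\<lambda>(k,l,m). real_of_int (m^2) / nsq (k,l,m))"

definition dz2lapinv :: "field \<Rightarrow> field" where "dz2lapinv f = dz (dz (lapinv f))"

definition Qsym :: "real \<Rightarrow> freq \<Rightarrow> real" where
  "Qsym \<mu> \<xi> = sqrt 2 / sqrt (1 + \<mu>^2 + sqrt ((1 + \<mu>^2)^2 - 4 * \<mu>^2 * zsym \<xi>))"

definition Qop :: "real \<Rightarrow> field \<Rightarrow> field" where "Qop \<mu> = mult (Qsym \<mu>)"
definition Qinv :: "real \<Rightarrow> field \<Rightarrow> field" where "Qinv \<mu> = mult (\<lambda>\<xi>. 1 / Qsym \<mu> \<xi>)"

text \<open>Inverse of the multiplier 1 - mu^2 dz^2 lapinv Q^2 (reciprocal symbol).\<close>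
definition Minv :: "real \<Rightarrow> field \<Rightarrow> field" where
  "Minv \<mu> = mult (\<lambda>\<xi>. 1 / (1 - \<mu>^2 * zsym \<xi> * (Qsym \<mu> \<xi>)^2))"

definition Cop :: "real \<Rightarrow> field \<Rightarrow> field" where "Cop \<mu> f = fneg (Qop \<mu> (Minv \<mu> f))"
definition Aop :: "real \<Rightarrow> field \<Rightarrow> field" where "Aop \<mu> f = fneg (Cop \<mu> (Qinv \<mu> f))"
definition Bop :: "real \<Rightarrow> field \<Rightarrow> field" where "Bop \<mu> f = dz2lapinv (Cop \<mu> (Qop \<mu> f))"
definition Dop :: "real \<Rightarrow> field \<Rightarrow> field" where "Dop \<mu> = Qinv \<mu>"

definition Valpha :: "real \<Rightarrow> field \<Rightarrow> state" where
  "Valpha \<mu> \<phi> = (\<phi>, (fzero, fzero, fzero),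
     (fscale \<mu> (Aop \<mu> (lapinv (dz (dx \<phi>)))),
      fscale \<mu> (Aop \<mu> (lapinv (dz (dy \<phi>)))),
      fadd (fscale \<mu> (Aop \<mu> (lapinv (dz (dz \<phi>)))))
           (fadd (fneg (fscale \<mu> \<phi>)) (fscale (\<mu>^3) (Bop \<mu> \<phi>)))))"

definition Vbeta :: "real \<Rightarrow> field \<Rightarrow> state" where
  "Vbeta \<mu> \<phi> = (fzero,
     (fscale (\<mu>^2) (Cop \<mu> (lapinv (dz (dx \<phi>)))),
      fscale (\<mu>^2) (Cop \<mu> (lapinv (dz (dy \<phi>)))),
      Dop \<mu> \<phi>),
     (fzero, fzero, fzero))"

definition szero :: state where "szero = (fzero, (fzero, fzero, fzero), (fzero, fzero, fzero))"

definition smap :: "(field \<Rightarrow> field) \<Rightarrow> state \<Rightarrow> state" where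
  "smap T V = (case V of (r, (u1, u2, u3), (b1, b2, b3)) \<Rightarrow>
     (T r, (T u1, T u2, T u3), (T b1, T b2, T b3)))"

definition sadd :: "state \<Rightarrow> state \<Rightarrow> state" where
  "sadd V W = (case V of (r, (u1, u2, u3), (b1, b2, b3)) \<Rightarrow>
     (case W of (r', (u1', u2', u3'), (b1', b2', b3')) \<Rightarrow>
       (fadd r r', (fadd u1 u1', fadd u2 u2', fadd u3 u3'), (fadd b1 b1', fadd b2 b2', fadd b3 b3'))))"

definition LA :: "state \<Rightarrow> state" where
  "LA V = (case V of (r, (u1, u2, u3), (b1, b2, b3)) \<Rightarrow>
     (fzero,
      (fadd (fneg (dx b3)) (dz b1), fadd (fneg (dy b3)) (dz b2), fzero),
      (dz u1, dz u2, fneg (fadd (dx u1) (dy u2)))))"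

definition LM :: "state \<Rightarrow> state" where
  "LM V = (case V of (r, (u1, u2, u3), (b1, b2, b3)) \<Rightarrow>
     (fneg (fadd (fadd (dx u1) (dy u2)) (dz u3)),
      (fneg (dx r), fneg (dy r), fneg (dz r)),
      (fzero, fzero, fzero)))"

end

theory Submission
  imports Defs
begin

lemma zsym_bounds: "0 \<le> zsym \<xi> \<and> zsym \<xi> \<le> 1"
proof -
  obtain k l m where x: "\<xi> = (k,l,m)" by (cases \<xi>) auto
  define X where "X = real_of_int (k^2+l^2+m^2)"
  define Y where "Y = real_of_int (m^2)"
  have z: "zsym \<xi> = Y / X" unfolding x zsym_def nsq_def X_def Y_def by simp
  have a: "Y \<le> X" unfolding X_def Y_def by simp
  have b: "0 \<le> Y" unfolding Y_def by simp
  have "0 \<le> Y / X" using a b by simp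
  moreover have "Y / X \<le> 1"
  proof (cases "X = 0")
    case True then show ?thesis by simp
  next
    case False then have "X > 0" using a b by linarith
    then show ?thesis using a by simp
  qed
  ultimately show ?thesis unfolding z by simp
qed

lemma Qsym_sq:
  shows "(Qsym \<mu> \<xi>)^2 = 2 / (1 + \<mu>^2 + sqrt ((1 + \<mu>^2)^2 - 4 * \<mu>^2 * zsym \<xi>))"
    and "0 < Qsym \<mu> \<xi>"
    and "(1 + \<mu>^2)^2 - 4 * \<mu>^2 * zsym \<xi> \<ge> 0"
proof -
  have z: "0 \<le> zsym \<xi>" "zsym \<xi> \<le> 1" using zsym_bounds by auto
  have "4 * \<mu>^2 * zsym \<xi> \<le> 4 * \<mu>^2" using z by (simp add: mult_left_le)
  moreover have "(1 + \<mu>^2)^2 - 4 * \<mu>^2 = (1 - \<mu>^2)^2" by (simp add: power2_eq_square algebra_simps)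
  ultimately show nn: "(1 + \<mu>^2)^2 - 4 * \<mu>^2 * zsym \<xi> \<ge> 0"
    by (metis diff_left_mono order_trans zero_le_power2)
  have pos: "0 < 1 + \<mu>^2 + sqrt ((1 + \<mu>^2)^2 - 4 * \<mu>^2 * zsym \<xi>)"
    using nn by (simp add: add_pos_nonneg)
  show "(Qsym \<mu> \<xi>)^2 = 2 / (1 + \<mu>^2 + sqrt ((1 + \<mu>^2)^2 - 4 * \<mu>^2 * zsym \<xi>))"
    unfolding Qsym_def using pos by (simp add: power_divide)
  show "0 < Qsym \<mu> \<xi>" unfolding Qsym_def using pos by simp
qed

lemma Q_quartic:
  "\<mu>^2 * zsym \<xi> * (Qsym \<mu> \<xi>)^2 * (Qsym \<mu> \<xi>)^2 - (1 + \<mu>^2) * (Qsym \<mu> \<xi>)^2 + 1 = 0"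
proof -
  define a where "a = 1 + \<mu>^2"
  define s where "s = sqrt ((1 + \<mu>^2)^2 - 4 * \<mu>^2 * zsym \<xi>)"
  have s2: "s^2 = a^2 - 4 * \<mu>^2 * zsym \<xi>" unfolding s_def a_def using Qsym_sq(3) by simp
  have pos: "0 < a + s" unfolding a_def s_def using Qsym_sq(3) by (simp add: add_pos_nonneg)
  have q: "(Qsym \<mu> \<xi>)^2 = 2 / (a + s)" using Qsym_sq(1) unfolding a_def s_def .
  have h: "4*\<mu>^2*zsym \<xi> - 2*a*(a+s) + (a+s)^2 = 0" using s2 by (simp add: power2_eq_square algebra_simps)
  define t where "t = 2/(a+s)"
  have ne: "a+s \<noteq> 0" using pos by simp
  have tt: "t*(a+s) = 2" using t_def ne nonzero_eq_divide_eq by blast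
  have "(a+s)^2 * (\<mu>^2 * zsym \<xi> * t * t - a * t + 1)
      = 4*\<mu>^2*zsym \<xi> - 2*a*(a+s) + (a+s)^2"
  proof -
    have "(a+s)^2 * (\<mu>^2 * zsym \<xi> * t * t - a * t + 1)
        = \<mu>^2 * zsym \<xi> * (t*(a+s))^2 - a*(t*(a+s))*(a+s) + (a+s)^2"
      by (simp add: algebra_simps power2_eq_square)
    also have "\<dots> = 4*\<mu>^2*zsym \<xi> - 2*a*(a+s) + (a+s)^2" unfolding tt by simp
    finally show ?thesis .
  qed
  then have "(a+s)^2 * (\<mu>^2 * zsym \<xi> * t * t - a * t + 1) = 0" using h by simp
  then have "\<mu>^2 * zsym \<xi> * t * t - a * t + 1 = 0" using pos by simp
  then show ?thesis unfolding q a_def[symmetric] t_def[symmetric] by simp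
qed

lemma D_pos:
  assumes "0 < \<mu>" "\<mu> < 1"
  shows "\<mu>^2 * zsym \<xi> * (Qsym \<mu> \<xi>)^2 < 1"
proof -
  define a where "a = 1 + \<mu>^2"
  define s where "s = sqrt ((1 + \<mu>^2)^2 - 4 * \<mu>^2 * zsym \<xi>)"
  have s0: "s \<ge> 0" unfolding s_def using Qsym_sq(3) by simp
  have q: "(Qsym \<mu> \<xi>)^2 = 2 / (a + s)" using Qsym_sq(1) unfolding a_def s_def .
  have z: "0 \<le> zsym \<xi>" "zsym \<xi> \<le> 1" using zsym_bounds by auto
  have "\<mu>^2 * (Qsym \<mu> \<xi>)^2 * zsym \<xi> \<le> \<mu>^2 * (Qsym \<mu> \<xi>)^2 * 1"
    using z by (intro mult_left_mono) auto
  hence "\<mu>^2 * zsym \<xi> * (Qsym \<mu> \<xi>)^2 \<le> \<mu>^2 * (Qsym \<mu> \<xi>)^2"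
    by (simp add: algebra_simps)
  also have "(Qsym \<mu> \<xi>)^2 \<le> 2 / a" unfolding q using s0 unfolding a_def
    by (simp add: frac_le add_pos_nonneg)
  hence "\<mu>^2 * (Qsym \<mu> \<xi>)^2 \<le> \<mu>^2 * (2 / a)" by (rule mult_left_mono) auto
  also have "\<mu>^2 * (2/a) < 1"
  proof -
    have m1: "\<mu>^2 < 1" using assms by (simp add: power_less_one_iff)
    have ap: "0 < a" unfolding a_def by (simp add: add_pos_nonneg)
    have "\<mu>^2 * 2 < a" unfolding a_def using m1 by linarith
    then show ?thesis using ap by (simp add: divide_less_eq)
  qed
  finally show ?thesis .
qed

lemma cfacts:
  assumes "0 < \<mu>" "\<mu> < 1" "(k,l,m) \<noteq> (0,0,0)"
  shows "complex_of_real (nsq (k,l,m)) \<noteq> 0"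
    and "complex_of_real (nsq (k,l,m)) = of_int k ^ 2 + of_int l ^ 2 + of_int m ^ 2"
    and "complex_of_real (zsym (k,l,m)) * complex_of_real (nsq (k,l,m)) = of_int m ^ 2"
    and "complex_of_real (Qsym \<mu> (k,l,m)) \<noteq> 0"
    and "1 - (complex_of_real \<mu>)^2 * complex_of_real (zsym (k,l,m)) * (complex_of_real (Qsym \<mu> (k,l,m)))^2 \<noteq> 0"
    and "(complex_of_real \<mu>)^2 * complex_of_real (zsym (k,l,m)) * (complex_of_real (Qsym \<mu> (k,l,m)))^2 * (complex_of_real (Qsym \<mu> (k,l,m)))^2
         - (1 + (complex_of_real \<mu>)^2) * (complex_of_real (Qsym \<mu> (k,l,m)))^2 + 1 = 0"
proof -
  have "real_of_int (k^2+l^2+m^2) \<noteq> 0"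
  proof
    assume "real_of_int (k^2+l^2+m^2) = 0"
    then have "k^2+l^2+m^2 = 0" by linarith
    then have "k = 0 \<and> l = 0 \<and> m = 0"
    proof -
      have "k^2 = 0" "l^2 = 0" "m^2 = 0"
        using \<open>k^2+l^2+m^2 = 0\<close> zero_le_power2[of k] zero_le_power2[of l] zero_le_power2[of m]
        by linarith+
      then show ?thesis by simp
    qed
    then show False using assms(3) by simp
  qed
  then have nz: "nsq (k,l,m) \<noteq> 0" unfolding nsq_def by simp
  then show "complex_of_real (nsq (k,l,m)) \<noteq> 0" by simp
  show "complex_of_real (nsq (k,l,m)) = of_int k ^ 2 + of_int l ^ 2 + of_int m ^ 2"
    unfolding nsq_def by simp
  have "zsym (k,l,m) * nsq (k,l,m) = real_of_int (m^2)" unfolding zsym_def using nz by simp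
  then have "complex_of_real (zsym (k,l,m) * nsq (k,l,m)) = complex_of_real (real_of_int (m^2))" by simp
  then show "complex_of_real (zsym (k,l,m)) * complex_of_real (nsq (k,l,m)) = of_int m ^ 2"
    by simp
  show "complex_of_real (Qsym \<mu> (k,l,m)) \<noteq> 0" using Qsym_sq(2)[of \<mu> "(k,l,m)"] by simp
  have "1 - \<mu>^2 * zsym (k,l,m) * (Qsym \<mu> (k,l,m))^2 \<noteq> 0" using D_pos[OF assms(1,2), of "(k,l,m)"] by linarith
  moreover have "complex_of_real (1 - \<mu>^2 * zsym (k,l,m) * (Qsym \<mu> (k,l,m))^2) = 1 - (complex_of_real \<mu>)^2 * complex_of_real (zsym (k,l,m)) * (complex_of_real (Qsym \<mu> (k,l,m)))^2"
    by simp
  ultimately show "1 - (complex_of_real \<mu>)^2 * complex_of_real (zsym (k,l,m)) * (complex_of_real (Qsym \<mu> (k,l,m)))^2 \<noteq> 0"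
    by (metis of_real_eq_0_iff)
  have "complex_of_real (\<mu>^2 * zsym (k,l,m) * (Qsym \<mu> (k,l,m))^2 * (Qsym \<mu> (k,l,m))^2 - (1 + \<mu>^2) * (Qsym \<mu> (k,l,m))^2 + 1) = 0"
    using Q_quartic by simp
  then show "(complex_of_real \<mu>)^2 * complex_of_real (zsym (k,l,m)) * (complex_of_real (Qsym \<mu> (k,l,m)))^2 * (complex_of_real (Qsym \<mu> (k,l,m)))^2
         - (1 + (complex_of_real \<mu>)^2) * (complex_of_real (Qsym \<mu> (k,l,m)))^2 + 1 = 0"
    by simp
qed

lemma b3_alg:
  fixes A AA B c MI N Q QI p :: complex
  assumes h1: "A * (A * N) + (AA * (AA * N) + B * (B * N)) = 1"
    and h2: "QI * Q = 1"
    and h4: "A * (A * Z) + (AA * (AA * Z) + B * (B * Z)) = B * B"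
    and h3': "MI = 1 + c * (c * (MI * (Q * (Q * Z))))"
  shows "\<i> * (c * (c * (A * (A * (B * (MI * (N * (Q * p)))))))) +
        (\<i> * (c * (c * (AA * (AA * (B * (MI * (N * (Q * p)))))))) +
         \<i> * (c * (c * (B * (B * (B * (MI * (N * (QI * (Q * (Q * p))))))))))) =
        \<i> * (c * (c * (B * (Q * p)))) +
        \<i> * (c * (c * (c * (c * (B * (B * (B * (MI * (N * (Q * (Q * (Q * p))))))))))))"
proof -
  have "Z = Z * (A * (A * N) + (AA * (AA * N) + B * (B * N)))" using h1 by simp
  also have "\<dots> = N * (A * (A * Z) + (AA * (AA * Z) + B * (B * Z)))" by (simp add: algebra_simps)
  also have "\<dots> = B * (B * N)" using h4 by simp
  finally have ZN: "Z = B * (B * N)" .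
  have h3: "MI = 1 + c * (c * (MI * (Q * (Q * (B * (B * N))))))" using h3' unfolding ZN .
  have "?thesis \<longleftrightarrow> \<i> * c * c * B * Q * p * MI * (A * (A * N) + (AA * (AA * N) + B * (B * N) * (QI * Q)))
      = \<i> * c * c * B * Q * p * (1 + c * (c * (MI * (Q * (Q * (B * (B * N)))))))"
    by (simp add: algebra_simps)
  also have "\<dots> \<longleftrightarrow> True" unfolding h2 using h1 h3[symmetric] by simp
  finally show ?thesis by simp
qed
lemma r_alg:
  fixes A AA B c MI N Q QI Z p :: complex
  assumes h1: "A * (A * N) + (AA * (AA * N) + B * (B * N)) = 1"
    and h4: "A * (A * Z) + (AA * (AA * Z) + B * (B * Z)) = B * B"
    and h2: "QI * Q = 1"
    and h3': "MI = 1 + c * (c * (MI * (Q * (Q * Z))))"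
    and h5: "1 + c * (c * (Q * (Q * (Q * (Q * Z))))) = Q * Q + c * (c * (Q * Q))"
  shows "\<i> * (c * (B * (Q * p))) +
        (\<i> * (c * (c * (c * (A * (A * (B * (MI * (N * (Q * p))))))))) +
         \<i> * (c * (c * (c * (AA * (AA * (B * (MI * (N * (Q * p)))))))))) =
        \<i> * (c * (B * (QI * p)))"
proof -
  have "Z = Z * (A * (A * N) + (AA * (AA * N) + B * (B * N)))" using h1 by simp
  also have "\<dots> = N * (A * (A * Z) + (AA * (AA * Z) + B * (B * Z)))" by (simp add: algebra_simps)
  also have "\<dots> = B * (B * N)" using h4 by simp
  finally have ZN: "Z = B * (B * N)" .
  have e1: "N * (A * A + AA * AA) = 1 - Z"
  proof -
    have "N * (A * A + AA * AA) = (A * (A * N) + (AA * (AA * N) + B * (B * N))) - B * (B * N)"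
      by (simp add: algebra_simps)
    then show ?thesis using h1 ZN by simp
  qed
  have m1: "c * c * MI * Q * Q * Z = MI - 1" using h3' by (simp add: algebra_simps)
  have m2: "Q * Q - c * c * Z * Q * Q * Q * Q = 1 - c * c * Q * Q" using h5 by (simp add: algebra_simps)
  have m3: "MI * (Q * Q - c * c * Z * Q * Q * Q * Q) = Q * Q * (MI - c * c * MI * Q * Q * Z)"
    by (simp add: algebra_simps)
  have m4: "MI - c * c * MI * Q * Q * Z = 1" using m1 by (simp add: algebra_simps)
  have key: "MI * (1 - c * c * Q * Q) = Q * Q" using m2 m3 m4 by simp
  have k2: "Q * Q + c * c * MI * Q * Q * (1 - Z) - 1 = Q * Q - MI * (1 - c * c * Q * Q)"
  proof -
    have "Q * Q + c * c * MI * Q * Q * (1 - Z) - 1 = Q * Q + c * c * MI * Q * Q - c * c * MI * Q * Q * Z - 1"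
      by (simp add: algebra_simps)
    also have "\<dots> = Q * Q + c * c * MI * Q * Q - MI" using m1 by simp
    also have "\<dots> = Q * Q - MI * (1 - c * c * Q * Q)" by (simp add: algebra_simps)
    finally show ?thesis .
  qed
  have k3: "Q * Q + c * c * MI * Q * Q * (1 - Z) - 1 = 0" using k2 key by simp
  have br: "Q + c * c * MI * Q * (1 - Z) - QI = 0"
  proof -
    have "Q + c * c * MI * Q * (1 - Z) - QI = (QI * Q) * (Q + c * c * MI * Q * (1 - Z)) - QI * 1"
      using h2 by simp
    also have "\<dots> = QI * (Q * Q + c * c * MI * Q * Q * (1 - Z) - 1)" by (simp add: algebra_simps)
    also have "\<dots> = 0" using k3 by simp
    finally show ?thesis .
  qed
  have "\<i> * (c * (B * (Q * p))) +
        (\<i> * (c * (c * (c * (A * (A * (B * (MI * (N * (Q * p))))))))) +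
         \<i> * (c * (c * (c * (AA * (AA * (B * (MI * (N * (Q * p)))))))))) -
        \<i> * (c * (B * (QI * p)))
      = \<i> * c * B * p * (Q + c * c * MI * Q * (N * (A * A + AA * AA)) - QI)"
    by (simp add: algebra_simps)
  also have "\<dots> = 0" unfolding e1 using br by simp
  finally show ?thesis by simp
qed

theorem lemma2p2:
  fixes \<mu> :: real and \<phi> :: field
  assumes "0 < \<mu>" and "\<mu> < 1"
    and "\<phi> (0, 0, 0) = 0"
  shows "sadd (sadd (LA (Valpha \<mu> \<phi>)) (smap (fscale \<mu>) (LM (Valpha \<mu> \<phi>))))
              (smap (\<lambda>f. fscale \<mu> (Qop \<mu> (dz f))) (Vbeta \<mu> \<phi>)) = szero
       \<and> sadd (sadd (LA (Vbeta \<mu> \<phi>)) (smap (fscale \<mu>) (LM (Vbeta \<mu> \<phi>))))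
              (smap (\<lambda>f. fscale \<mu> (Qop \<mu> (dz f))) (Valpha \<mu> \<phi>)) = szero"
proof -
  define N where "N = (\<lambda>\<xi>. complex_of_real (1 / nsq \<xi>))"
  define Q where "Q = (\<lambda>\<xi>. complex_of_real (Qsym \<mu> \<xi>))"
  define QI where "QI = (\<lambda>\<xi>. complex_of_real (1 / Qsym \<mu> \<xi>))"
  define MI where "MI = (\<lambda>\<xi>. complex_of_real (1 / (1 - \<mu>^2 * zsym \<xi> * (Qsym \<mu> \<xi>)^2)))"
  define Z where "Z = (\<lambda>\<xi>. complex_of_real (zsym \<xi>))"
  define c where "c = complex_of_real \<mu>"
  have L: "lapinv f = (\<lambda>\<xi>. if \<xi> = (0,0,0) then 0 else - f \<xi> * N \<xi>)" for f
    unfolding lapinv_def N_def by (auto simp: fun_eq_iff divide_inverse of_real_inverse)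
  have Qe: "Qop \<mu> f = (\<lambda>\<xi>. Q \<xi> * f \<xi>)" for f unfolding Qop_def mult_def Q_def by simp
  have QIe: "Qinv \<mu> f = (\<lambda>\<xi>. QI \<xi> * f \<xi>)" for f unfolding Qinv_def mult_def QI_def by simp
  have MIe: "Minv \<mu> f = (\<lambda>\<xi>. MI \<xi> * f \<xi>)" for f unfolding Minv_def mult_def MI_def by simp
  have Se: "fscale r f = (\<lambda>\<xi>. complex_of_real r * f \<xi>)" for r f unfolding fscale_def by simp
  have R: "N (k,l,m) * (of_int k ^ 2 + of_int l ^ 2 + of_int m ^ 2) = 1
     \<and> Z (k,l,m) * (of_int k ^ 2 + of_int l ^ 2 + of_int m ^ 2) = of_int m ^ 2
     \<and> Q (k,l,m) * QI (k,l,m) = 1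
     \<and> MI (k,l,m) * (1 - c^2 * Z (k,l,m) * Q (k,l,m) ^ 2) = 1
     \<and> c^2 * Z (k,l,m) * Q (k,l,m)^2 * Q (k,l,m)^2 - (1 + c^2) * Q (k,l,m)^2 + 1 = 0"
    if "(k,l,m) \<noteq> (0,0,0)" for k l m
  proof -
    note F = cfacts[OF assms(1,2) that]
    show ?thesis unfolding N_def Z_def Q_def QI_def MI_def c_def
      using F by (simp add: field_simps of_real_divide)
  qed
  have Qnz: "Q \<xi> \<noteq> 0" for \<xi> unfolding Q_def using Qsym_sq(2)[of \<mu> \<xi>] by simp
  have QQI: "Q \<xi> * QI \<xi> = 1" for \<xi> unfolding Q_def QI_def using Qsym_sq(2)[of \<mu> \<xi>]
    by (simp flip: of_real_mult)
  show ?thesis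
  apply (simp add: Valpha_def Vbeta_def LA_def LM_def sadd_def smap_def szero_def)
  apply (simp add: fun_eq_iff fadd_def fneg_def Se fzero_def dx_def dy_def dz_def Aop_def Bop_def Cop_def Dop_def Qe QIe MIe dz2lapinv_def L flip: c_def)
  apply (intro conjI allI)
  apply (simp_all add: assms Qnz QQI)
  subgoal for a aa b
    apply (rule impI)
    apply (subgoal_tac "(a,aa,b) \<noteq> (0,0,0)")
     prefer 2 apply simp
    apply (drule R)
    apply (thin_tac "aa = 0 \<longrightarrow> a = 0 \<longrightarrow> b \<noteq> 0")
    apply (elim conjE)
    apply (simp add: algebra_simps power2_eq_square power3_eq_cube)
    done
  subgoal for a aa b
    apply (rule impI)
    apply (subgoal_tac "(a,aa,b) \<noteq> (0,0,0)")
     prefer 2 apply simp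
    apply (drule R)
    apply (thin_tac "aa = 0 \<longrightarrow> a = 0 \<longrightarrow> b \<noteq> 0")
    apply (elim conjE)
    apply (simp add: algebra_simps power2_eq_square power3_eq_cube)
    done
  subgoal for a aa b
    apply (rule impI)
    apply (subgoal_tac "(a,aa,b) \<noteq> (0,0,0)")
     prefer 2 apply simp
    apply (drule R)
    apply (thin_tac "aa = 0 \<longrightarrow> a = 0 \<longrightarrow> b \<noteq> 0")
    apply (elim conjE)
    apply (simp add: algebra_simps power2_eq_square power3_eq_cube)
    apply (rule r_alg)
    apply assumption+
    done
  subgoal for a aa b
    apply (rule impI)
    apply (subgoal_tac "(a,aa,b) \<noteq> (0,0,0)")
     prefer 2 apply simp
    apply (drule R)
    apply (thin_tac "aa = 0 \<longrightarrow> a = 0 \<longrightarrow> b \<noteq> 0")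
    apply (elim conjE)
    apply (simp add: algebra_simps power2_eq_square power3_eq_cube)
    done
  subgoal for a aa b
    apply (rule impI)
    apply (subgoal_tac "(a,aa,b) \<noteq> (0,0,0)")
     prefer 2 apply simp
    apply (drule R)
    apply (thin_tac "aa = 0 \<longrightarrow> a = 0 \<longrightarrow> b \<noteq> 0")
    apply (elim conjE)
    apply (simp add: algebra_simps power2_eq_square power3_eq_cube)
    done
  subgoal for a aa b
    apply (rule impI)
    apply (subgoal_tac "(a,aa,b) \<noteq> (0,0,0)")
     prefer 2 apply simp
    apply (drule R)
    apply (thin_tac "aa = 0 \<longrightarrow> a = 0 \<longrightarrow> b \<noteq> 0")
    apply (elim conjE)
    apply (simp add: algebra_simps power2_eq_square power3_eq_cube)
    apply (rule b3_alg)
    apply assumption+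
    done
  done
qed
end
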